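(* Let $f:\mathbb{R}^M\times\mathbb{R}^m\to\mathbb{R}^N$ be twice differentiable in $\boldsymbol{\theta}\in\mathbb{R}^m$, let $(\mathbf{x}_i,\mathbf{y}_i)_{i=1}^n$ be training data, and let $\varepsilon>0$, $M_0>0$. Suppose $\|f(\mathbf{x}_i,\boldsymbol{\theta})-\mathbf{y}_i\|_2<\varepsilon$ for all $i$, and $|\theta_j|^2\,\|\partial^2 f(\mathbf{x}_i,\boldsymbol{\theta})/\partial\theta_j^2\|_2<M_0$ for all $i$ and all $j\in\{1,\dots,m\}$. Then $$S_{\mathrm{adaptive}}(\boldsymbol{\theta})=\frac1n\sum_{i=1}^n\sum_{j=1}^m|\theta_j|^2\,\Big\|\frac{\partial f(\mathbf{x}_i,\boldsymbol{\theta})}{\partial\theta_j}\Big\|_2^2+O(\varepsilon),$$ where the implied constant depends only on $m$ and $M_0$.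
   Context: The loss is the MSE loss $L(\boldsymbol{\theta})=\frac1n\sum_{i=1}^n\frac12\|f(\mathbf{x}_i,\boldsymbol{\theta})-\mathbf{y}_i\|_2^2$. The elementwise-adaptive sharpness is $S_{\mathrm{adaptive}}(\boldsymbol{\theta})=\operatorname{Tr}\big(\nabla^2_{\boldsymbol{\theta}}L(\boldsymbol{\theta})\odot|\boldsymbol{\theta}||\boldsymbol{\theta}|^{T}\big)$, where $|\boldsymbol{\theta}|$ is the entrywise absolute value of the parameter vector and $\odot$ is the entrywise (Hadamard) product; equivalently $S_{\mathrm{adaptive}}(\boldsymbol{\theta})=\sum_{j=1}^m|\theta_j|^2\,\partial^2L/\partial\theta_j^2$. *)

theory Defs
  imports "HOL-Analysis.Analysis"
begin

definition partial_deriv ::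
  "(real^'m \<Rightarrow> 'b::real_normed_vector) \<Rightarrow> 'm \<Rightarrow> real^'m \<Rightarrow> 'b" where
  "partial_deriv g j \<theta> = frechet_derivative g (at \<theta>) (axis j 1)"

text \<open>Twice (Frechet) differentiable on the whole parameter space: g is differentiable
  everywhere and every first partial derivative is differentiable everywhere
  (in finite dimension this is differentiability of the derivative map).\<close>
definition twice_differentiable :: "(real^'m \<Rightarrow> 'b::real_normed_vector) \<Rightarrow> bool" where
  "twice_differentiable g \<longleftrightarrow>
     (\<forall>\<theta>. g differentiable (at \<theta>)) \<and>
     (\<forall>j \<theta>. (\<lambda>t. partial_deriv g j t) differentiable (at \<theta>))"

definition hessian :: "(real^'m \<Rightarrow> real) \<Rightarrow> real^'m \<Rightarrow> 'm \<Rightarrow> 'm \<Rightarrow> real" where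
  "hessian L \<theta> k j = partial_deriv (\<lambda>t. partial_deriv L j t) k \<theta>"

definition mse_loss ::
  "('a \<Rightarrow> real^'m \<Rightarrow> real^'N) \<Rightarrow> nat \<Rightarrow> (nat \<Rightarrow> 'a) \<Rightarrow> (nat \<Rightarrow> real^'N) \<Rightarrow> real^'m \<Rightarrow> real" where
  "mse_loss f n x y \<theta> = (1 / real n) * (\<Sum>i=1..n. (1/2) * (norm (f (x i) \<theta> - y i))\<^sup>2)"

text \<open>Elementwise-adaptive sharpness Tr(Hess L \<odot> |theta||theta|^T).\<close>
definition S_adaptive :: "(real^'m \<Rightarrow> real) \<Rightarrow> real^'m \<Rightarrow> real" where
  "S_adaptive L \<theta> = (\<Sum>j\<in>UNIV. hessian L \<theta> j j * (\<bar>\<theta> $ j\<bar> * \<bar>\<theta> $ j\<bar>))"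

end

theory Submission
  imports Defs
begin

lemma dL:
  fixes f :: "real^'M \<Rightarrow> real^'m \<Rightarrow> real^'N"
  assumes "\<And>i. f (x i) differentiable (at t)"
  shows "(mse_loss f n x y has_derivative (\<lambda>h. (1/real n) * (\<Sum>i=1..n. (f (x i) t - y i) \<bullet> frechet_derivative (f (x i)) (at t) h))) (at t)"
proof -
  have D: "\<And>i. (f (x i) has_derivative frechet_derivative (f (x i)) (at t)) (at t)"
    using assms frechet_derivative_works by blast
  have e: "mse_loss f n x y = (\<lambda>t. (1/real n) * (\<Sum>i=1..n. (1/2) * ((f (x i) t - y i) \<bullet> (f (x i) t - y i))))"
    by (rule ext) (simp add: mse_loss_def power2_norm_eq_inner)
  show ?thesis unfolding e
    apply (rule has_derivative_eq_rhs)
     apply (rule has_derivative_mult_right has_derivative_sum has_derivative_inner has_derivative_diff D has_derivative_const)+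
    apply (rule ext) apply (simp add: sum_distrib_left inner_commute)
    done
qed

lemma pL:
  fixes f :: "real^'M \<Rightarrow> real^'m \<Rightarrow> real^'N"
  assumes "\<And>xx. twice_differentiable (f xx)"
  shows "partial_deriv (mse_loss f n x y) j = (\<lambda>t. (1/real n) * (\<Sum>i=1..n. (f (x i) t - y i) \<bullet> partial_deriv (f (x i)) j t))"
proof (rule ext)
  fix t
  have "(mse_loss f n x y has_derivative (\<lambda>h. (1/real n) * (\<Sum>i=1..n. (f (x i) t - y i) \<bullet> frechet_derivative (f (x i)) (at t) h))) (at t)"
    by (rule dL) (use assms in \<open>auto simp: twice_differentiable_def\<close>)
  from frechet_derivative_at[OF this, symmetric] show "partial_deriv (mse_loss f n x y) j t = (1/real n) * (\<Sum>i=1..n. (f (x i) t - y i) \<bullet> partial_deriv (f (x i)) j t)"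
    unfolding partial_deriv_def by simp
qed

lemma hL:
  fixes f :: "real^'M \<Rightarrow> real^'m \<Rightarrow> real^'N"
  assumes "\<And>xx. twice_differentiable (f xx)"
  shows "hessian (mse_loss f n x y) \<theta> j j = (1/real n) * (\<Sum>i=1..n. (norm (partial_deriv (f (x i)) j \<theta>))\<^sup>2
     + (f (x i) \<theta> - y i) \<bullet> partial_deriv (\<lambda>t. partial_deriv (f (x i)) j t) j \<theta>)"
proof -
  have D: "\<And>i. (f (x i) has_derivative frechet_derivative (f (x i)) (at \<theta>)) (at \<theta>)"
    using assms frechet_derivative_works twice_differentiable_def by blast
  have Q: "\<And>i. ((\<lambda>t. partial_deriv (f (x i)) j t) has_derivative frechet_derivative (\<lambda>t. partial_deriv (f (x i)) j t) (at \<theta>)) (at \<theta>)"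
    using assms frechet_derivative_works twice_differentiable_def by blast
  have "((\<lambda>t. (1/real n) * (\<Sum>i=1..n. (f (x i) t - y i) \<bullet> partial_deriv (f (x i)) j t)) has_derivative
     (\<lambda>h. (1/real n) * (\<Sum>i=1..n. (f (x i) \<theta> - y i) \<bullet> frechet_derivative (\<lambda>t. partial_deriv (f (x i)) j t) (at \<theta>) h
         + frechet_derivative (f (x i)) (at \<theta>) h \<bullet> partial_deriv (f (x i)) j \<theta>))) (at \<theta>)"
    apply (rule has_derivative_eq_rhs)
     apply (rule has_derivative_mult_right has_derivative_sum has_derivative_inner has_derivative_diff D Q has_derivative_const)+
    apply (rule ext) apply (simp add: sum_distrib_left inner_commute)
    done
  from frechet_derivative_at[OF this, symmetric] show ?thesis
    unfolding hessian_def pL[OF assms] partial_deriv_def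
    by (simp add: power2_norm_eq_inner add.commute)
qed

theorem lemma4:
  fixes f :: "real^'M \<Rightarrow> real^'m \<Rightarrow> real^'N"
    and x :: "nat \<Rightarrow> real^'M" and y :: "nat \<Rightarrow> real^'N"
    and n :: nat and \<theta> :: "real^'m" and \<epsilon> M0 :: real
  assumes "\<And>xx. twice_differentiable (f xx)"
    and "\<epsilon> > 0" and "M0 > 0"
    and "\<And>i. i \<in> {1..n} \<Longrightarrow> norm (f (x i) \<theta> - y i) < \<epsilon>"
    and "\<And>i j. i \<in> {1..n} \<Longrightarrow>
           \<bar>\<theta> $ j\<bar>\<^sup>2 * norm (partial_deriv (\<lambda>t. partial_deriv (f (x i)) j t) j \<theta>) < M0"
  shows "\<bar>S_adaptive (mse_loss f n x y) \<theta>
          - (1 / real n) * (\<Sum>i=1..n. \<Sum>j\<in>UNIV. \<bar>\<theta> $ j\<bar>\<^sup>2 * (norm (partial_deriv (f (x i)) j \<theta>))\<^sup>2)\<bar>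
         \<le> real CARD('m) * M0 * \<epsilon>"
proof -
  let ?r = "\<lambda>i. f (x i) \<theta> - y i"
  let ?s = "\<lambda>i j. partial_deriv (\<lambda>t. partial_deriv (f (x i)) j t) j \<theta>"
  let ?E = "\<lambda>i j. \<bar>\<theta> $ j\<bar>\<^sup>2 * (?r i \<bullet> ?s i j)"
  have S: "S_adaptive (mse_loss f n x y) \<theta> = (\<Sum>j\<in>UNIV. (1/real n) * (\<Sum>i=1..n. \<bar>\<theta> $ j\<bar>\<^sup>2 * (norm (partial_deriv (f (x i)) j \<theta>))\<^sup>2 + ?E i j))"
    unfolding S_adaptive_def hL[OF assms(1)]
    by (simp add: power2_eq_square sum_distrib_left sum_distrib_right algebra_simps)
  have diff: "S_adaptive (mse_loss f n x y) \<theta>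
          - (1 / real n) * (\<Sum>i=1..n. \<Sum>j\<in>UNIV. \<bar>\<theta> $ j\<bar>\<^sup>2 * (norm (partial_deriv (f (x i)) j \<theta>))\<^sup>2)
       = (\<Sum>j\<in>UNIV. (1/real n) * (\<Sum>i=1..n. ?E i j))"
    unfolding S by (simp add: sum.distrib sum_distrib_left distrib_left) (rule sum.swap)
  have Eb: "\<bar>?E i j\<bar> \<le> M0 * \<epsilon>" if "i \<in> {1..n}" for i j
  proof -
    have "\<bar>?E i j\<bar> = \<bar>\<theta> $ j\<bar>\<^sup>2 * \<bar>?r i \<bullet> ?s i j\<bar>" by (simp add: abs_mult)
    also have "\<dots> \<le> \<bar>\<theta> $ j\<bar>\<^sup>2 * (norm (?r i) * norm (?s i j))"
      by (rule mult_left_mono) (auto simp: Cauchy_Schwarz_ineq2)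
    also have "\<dots> = norm (?r i) * (\<bar>\<theta> $ j\<bar>\<^sup>2 * norm (?s i j))" by simp
    also have "\<dots> \<le> \<epsilon> * M0"
      using assms(2) assms(4)[OF that] assms(5)[OF that, of j]
      by (intro mult_mono) auto
    finally show ?thesis by (simp add: mult.commute)
  qed
  have "\<bar>\<Sum>j\<in>UNIV. (1/real n) * (\<Sum>i=1..n. ?E i j)\<bar> \<le> (\<Sum>j\<in>(UNIV::'m set). M0 * \<epsilon>)"
  proof (rule order_trans[OF sum_abs], rule sum_mono)
    fix j :: 'm
    have "\<bar>(1/real n) * (\<Sum>i=1..n. ?E i j)\<bar> = (1/real n) * \<bar>\<Sum>i=1..n. ?E i j\<bar>"
      by (simp add: abs_mult)
    also have "\<dots> \<le> (1/real n) * (\<Sum>i=1..n. M0 * \<epsilon>)"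
      by (intro mult_left_mono order_trans[OF sum_abs] sum_mono Eb) auto
    also have "\<dots> \<le> M0 * \<epsilon>"
      using assms(2,3) by (cases "n = 0") auto
    finally show "\<bar>(1/real n) * (\<Sum>i=1..n. ?E i j)\<bar> \<le> M0 * \<epsilon>" .
  qed
  then show ?thesis unfolding diff by simp
qed

end
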